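(* Let $A=(0,0)$ and $B=(b_1,b_2)$ with $b_1>0$ and $0\le b_2\le b_1-1$. Let $s=b_2/b_1$, let $k\in(0,1)$, let $Q=(1-s)(1,0)+s(3/2,1/2)$ and $P=(1-k)(1,1)+kQ$, and let $\gamma(t)=Bt^3+3Pt^2(1-t)+3Pt(1-t)^2$ for $0\le t\le1$. Then $\gamma(t)$ lies in the region $\{(x,y): x>y>0\}$ for every $t\in(0,1)$.
   Context: $\gamma$ is the cubic B\'ezier curve with endpoints $A=\gamma(0)$ and $B=\gamma(1)$ and with both inner control points equal to $P$. *)

theory Defs
  imports "HOL-Analysis.Analysis"
begin

end

theory Submission
  imports Defs
begin

theorem lemma7:
  fixes b1 b2 k t :: real
  assumes "b1 > 0" and "0 \<le> b2" and "b2 \<le> b1 - 1"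
    and "0 < k" and "k < 1"
    and "0 < t" and "t < 1"
  defines "s \<equiv> b2 / b1"
  defines "B \<equiv> (b1, b2) :: real \<times> real"
  defines "Q \<equiv> (1 - s) *\<^sub>R ((1, 0) :: real \<times> real) + s *\<^sub>R (3/2, 1/2)"
  defines "P \<equiv> (1 - k) *\<^sub>R ((1, 1) :: real \<times> real) + k *\<^sub>R Q"
  defines "\<gamma> \<equiv> (\<lambda>t::real. t^3 *\<^sub>R B + (3 * t^2 * (1 - t)) *\<^sub>R P + (3 * t * (1 - t)^2) *\<^sub>R P)"
  shows "fst (\<gamma> t) > snd (\<gamma> t) \<and> snd (\<gamma> t) > 0"
proof -
  have s0: "0 \<le> s" using assms(1,2) unfolding s_def by simp
  have s1: "s \<le> 1" using assms(1,3) unfolding s_def by simp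
  have Px: "fst P = 1 + k * s / 2" unfolding P_def Q_def by (simp add: algebra_simps)
  have Py: "snd P = 1 - k + k * s / 2" unfolding P_def Q_def by (simp add: algebra_simps)
  define c where "c = 3 * t^2 * (1 - t) + 3 * t * (1 - t)^2"
  have c0: "c > 0" unfolding c_def using assms(6,7) by (simp add: add_pos_pos)
  have gx: "fst (\<gamma> t) = t^3 * b1 + c * fst P" unfolding \<gamma>_def B_def c_def by (simp add: algebra_simps)
  have gy: "snd (\<gamma> t) = t^3 * b2 + c * snd P" unfolding \<gamma>_def B_def c_def by (simp add: algebra_simps)
  have t3: "t^3 > 0" using assms(6) by simp
  have "k * s \<ge> 0" using s0 assms(4) by simp
  hence "snd P > 0" using Py assms(5) by linarith
  hence "c * snd P > 0" using c0 by simp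
  moreover have "t^3 * b2 \<ge> 0" using t3 assms(2) by simp
  moreover have "t^3 * b1 \<ge> t^3 * b2" using t3 assms(3) by simp
  moreover have "c * fst P > c * snd P" using c0 Px Py assms(4) by simp
  ultimately show ?thesis unfolding gx gy by linarith
qed

end
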